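(* Let $1<\alpha\leq2$, let $X$ be a scalar symmetric $\alpha$-stable Lévy process with $X_0=0$ and $\mathbb{E}[e^{iuX_t}]=e^{-|u|^\alpha t}$, let $T>0$, $n\in\mathbb{N}$, $\Delta_n=T/n$, $t_k=k\Delta_n$. Let $-\infty\leq a\leq b\leq\infty$, $g=\mathbf{1}_{[a,b]}$, and for $0\leq t,t'\leq T$ set \[ E_{t,t'}=\mathbb{E}\bigl[(g(X_t)-g(X_{\Delta_n\lfloor t/\Delta_n\rfloor}))(g(X_{t'})-g(X_{\Delta_n\lfloor t'/\Delta_n\rfloor}))\bigr]. \] Then for sufficiently small $\varepsilon>0$, with implicit constants independent of $t,t',k,k',n,T,a,b$: (i) if $t_{k-1}\leq t<t_k$ and $t_{k'-1}\leq t'<t_{k'}$ with $k<k'$, then \[ |E_{t,t'}|\lesssim(1\vee T^{\varepsilon/\alpha})\bigl(t_{k-1}^{-(1+\varepsilon)/\alpha}\Delta_n^{1/\alpha}+t_{k-1}^{-1-\varepsilon/\alpha}\Delta_n\log n\bigr); \] (ii) if $t_{k-1}<t<t'<t_k$, then \[ |E_{t,t'}|\lesssim\Delta_n^{1/\alpha}\bigl(t_{k-1}^{-1/\alpha}+t_{k-1}^{-(1+\varepsilon)/\alpha}\bigr)+\Delta_n^{1-\varepsilon/\alpha}t_{k-1}^{-1-\varepsilon/\alpha}+\Delta_n^{1-2\varepsilon/\alpha}t_{k-1}^{-1}. \]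
   Context: $f\lesssim g$ means $f\leq Cg$ for a finite constant $C$ (depending only on $\alpha,\varepsilon$). When $a=-\infty$ or $b=\infty$, $[a,b]$ denotes the corresponding closed half-line or $\mathbb{R}$. *)

theory Defs
  imports "HOL-Probability.Probability"
begin

definition sym_stable_levy :: "'a measure \<Rightarrow> real \<Rightarrow> (real \<Rightarrow> 'a \<Rightarrow> real) \<Rightarrow> bool" where
  "sym_stable_levy M \<alpha> X \<longleftrightarrow>
     prob_space M \<and>
     (\<forall>t\<ge>0. X t \<in> borel_measurable M) \<and>
     (AE \<omega> in M. X 0 \<omega> = 0) \<and>
     (\<forall>(ts :: nat \<Rightarrow> real) m. 0 \<le> ts 0 \<and> (\<forall>i<m. ts i \<le> ts (Suc i)) \<longrightarrow>
        prob_space.indep_vars M (\<lambda>_. borel) (\<lambda>i \<omega>. X (ts (Suc i)) \<omega> - X (ts i) \<omega>) {..<m}) \<and>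
     (\<forall>s t u. 0 \<le> s \<and> s \<le> t \<longrightarrow>
        char (distr M borel (\<lambda>\<omega>. X t \<omega> - X s \<omega>)) u
          = complex_of_real (exp (- (\<bar>u\<bar> powr \<alpha>) * (t - s))))"

definition ind_ab :: "ereal \<Rightarrow> ereal \<Rightarrow> real \<Rightarrow> real" where
  "ind_ab a b x = (if a \<le> ereal x \<and> ereal x \<le> b then 1 else 0)"

definition E_tt :: "'a measure \<Rightarrow> (real \<Rightarrow> 'a \<Rightarrow> real) \<Rightarrow> ereal \<Rightarrow> ereal \<Rightarrow> real \<Rightarrow> real \<Rightarrow> real \<Rightarrow> real" where
  "E_tt M X a b \<Delta> t t' =
     integral\<^sup>L M (\<lambda>\<omega>.
       (ind_ab a b (X t \<omega>) - ind_ab a b (X (\<Delta> * real_of_int \<lfloor>t / \<Delta>\<rfloor>) \<omega>)) *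
       (ind_ab a b (X t' \<omega>) - ind_ab a b (X (\<Delta> * real_of_int \<lfloor>t' / \<Delta>\<rfloor>) \<omega>)))"

end

theory Submission
  imports Defs
begin

lemma exp_bound2:
  fixes w :: real assumes "w \<ge> 0" shows "exp (- w) \<le> 2 / (1 + w^2)"
proof -
  have "1 + w + w^2/2 \<le> exp w" using exp_lower_Taylor_quadratic[OF assms] .
  hence "(1 + w^2) / 2 \<le> exp w" using assms by (simp add: power2_eq_square) 
  hence "(1 + w^2) * exp (-w) \<le> 2" by (simp add: exp_minus field_simps)
  thus ?thesis by (simp add: field_simps add_pos_nonneg)
qed

lemma arctan_int:
  fixes lam c :: real assumes "lam > 0"
  shows "(LBINT t=a..b. c / (1 + (lam*t)^2)) = c * arctan (lam*b) / lam - c * arctan (lam*a) / lam"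
proof (rule interval_integral_FTC_finite)
  show "continuous_on {min a b..max a b} (\<lambda>t. c / (1 + (lam * t)\<^sup>2))"
    by (intro continuous_intros) (auto, smt (verit) zero_le_power2)
  fix x
  have "((\<lambda>t. c * arctan (lam*t) / lam) has_real_derivative (c * (inverse (1 + (lam*x)^2) * lam) / lam)) (at x)"
    using assms by (intro derivative_eq_intros DERIV_arctan) auto
  then have "((\<lambda>t. c * arctan (lam*t) / lam) has_real_derivative (c / (1 + (lam*x)^2))) (at x)"
  proof -
    have nz: "1 + (lam*x)^2 \<noteq> 0" by (smt (verit) zero_le_power2)
    have "c * (inverse (1 + (lam*x)^2) * lam) / lam = c / (1 + (lam*x)^2)" using assms nz by (simp add: divide_inverse)
    thus ?thesis using \<open>((\<lambda>t. c * arctan (lam*t) / lam) has_real_derivative (c * (inverse (1 + (lam*x)^2) * lam) / lam)) (at x)\<close> by simp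
  qed
  then show "((\<lambda>t. c * arctan (lam*t) / lam) has_vector_derivative c / (1 + (lam * x)\<^sup>2)) (at x within {min a b..max a b})"
    by (simp add: has_real_derivative_iff_has_vector_derivative has_vector_derivative_at_within)
qed


lemma inv_bound:
  fixes N :: "real measure" and lam a b :: real
  assumes N: "real_distribution N" and lam: "lam > 0"
   and ch: "\<And>u. cmod (char N u) \<le> 2 / (1 + (lam*u)^2)"
   and ab: "a \<le> b" and na: "measure N {a} = 0" and nb: "measure N {b} = 0"
  shows "measure N {a<..b} \<le> (b - a) / lam"
proof -
  interpret real_distribution N by fact
  define G where "G t = (iexp (-(t * a)) - iexp (-(t * b))) / (\<i> * t) * char N t" for t
  have Gm: "G \<in> borel_measurable borel" unfolding G_def by measurable
  have Gb: "cmod (G t) \<le> (b - a) * (2 / (1 + (lam*t)^2))" for t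
  proof (cases "t = 0")
    case True then show ?thesis using ab by (simp add: G_def)
  next
    case False
    have "cmod ((iexp (-(t * a)) - iexp (-(t * b))) / (\<i> * t)) = cmod ((iexp ((-t) * b) - iexp ((-t) * a)) / (\<i> * (-t)))"
      by (simp add: norm_divide norm_mult norm_minus_commute)
    also have "\<dots> \<le> b - a" using Levy_Inversion_aux2[OF ab, of "-t"] False by simp
    finally have 1: "cmod ((iexp (-(t * a)) - iexp (-(t * b))) / (\<i> * t)) \<le> b - a" .
    show ?thesis unfolding G_def norm_mult
      by (rule mult_mono[OF 1 ch]) (use ab in auto)
  qed
  have Gb2: "cmod (G t) \<le> (b - a) * 2" for t
  proof -
    have y: "0 \<le> (lam*t)^2" by simp
    have "2 / (1 + (lam*t)^2) \<le> 2" using y by (auto simp: divide_le_eq add_pos_nonneg)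
    then have "(b - a) * (2 / (1 + (lam*t)^2)) \<le> (b - a) * 2" using ab by (intro mult_left_mono) auto
    then show ?thesis using Gb[of t] by linarith
  qed
  have bnd: "norm (complex_of_real (1 / (2 * pi)) * (CLBINT t=ereal (real_of_int (- int T))..ereal (real T). G t)) \<le> (b - a) / lam" for T :: nat
  proof -
    let ?l = "real_of_int (- int T)" and ?r = "real T"
    have lr: "?l \<le> ?r" by simp
    have Gi: "complex_set_integrable lborel {?l..?r} G"
        unfolding set_integrable_def
        by (rule integrableI_bounded_set_indicator[where B="(b-a)*2"]) (use Gm Gb2 in auto)
    have "(CLBINT t=ereal ?l..ereal ?r. G t) = (CLBINT t:{?l..?r}. G t)"
      by (rule interval_integral_Icc[OF lr])
    then have "norm (CLBINT t=ereal ?l..ereal ?r. G t) \<le> (LBINT t:{?l..?r}. norm (G t))"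
      using set_integral_norm_bound[of lborel "{?l..?r}" G] Gi by simp
    also have "\<dots> \<le> (LBINT t:{?l..?r}. (b - a) * (2 / (1 + (lam*t)^2)))"
    proof (rule set_integral_mono)
      show "set_integrable lborel {?l..?r} (\<lambda>t. cmod (G t))"
        using Gi by (rule set_integrable_norm)
      show "set_integrable lborel {?l..?r} (\<lambda>t. (b - a) * (2 / (1 + (lam*t)^2)))"
        unfolding set_integrable_def
        by (rule borel_integrable_compact) (auto intro!: continuous_intros simp: add_pos_nonneg, smt (verit) zero_le_power2)
    qed (use Gb in auto)
    also have "\<dots> = (LBINT t=ereal ?l..ereal ?r. (b - a) * 2 / (1 + (lam*t)^2))"
      by (subst interval_integral_Icc[OF lr]) simp
    also have "\<dots> = (b - a) * 2 * arctan (lam * ?r) / lam - (b - a) * 2 * arctan (lam * ?l) / lam"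
      by (rule arctan_int[OF lam])
    also have "\<dots> = (b - a) * 2 * (arctan (lam * ?r) - arctan (lam * ?l)) / lam"
      by (simp only: right_diff_distrib diff_divide_distrib)
    also have "\<dots> \<le> (b - a) * 2 * pi / lam"
    proof -
      have "arctan (lam * ?r) - arctan (lam * ?l) \<le> pi"
        using arctan_ubound[of "lam * ?r"] arctan_lbound[of "lam * ?l"] by linarith
      then show ?thesis using ab lam
        by (intro divide_right_mono mult_left_mono) auto
    qed
    finally have I: "norm (CLBINT t=ereal ?l..ereal ?r. G t) \<le> (b - a) * 2 * pi / lam" .
    have "norm (complex_of_real (1 / (2 * pi)) * (CLBINT t=ereal ?l..ereal ?r. G t)) = (1 / (2 * pi)) * norm (CLBINT t=ereal ?l..ereal ?r. G t)"
      by (simp only: norm_mult norm_of_real) simp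
    also have "\<dots> \<le> (1 / (2 * pi)) * ((b - a) * 2 * pi / lam)"
      by (rule mult_left_mono[OF I]) simp
    also have "\<dots> = (b - a) / lam" using lam by (simp add: field_simps)
    finally show ?thesis .
  qed
  have lim: "(\<lambda>T. complex_of_real (1 / (2 * pi)) * (CLBINT t=ereal (real_of_int (- int T))..ereal (real T). G t))
     \<longlonglongrightarrow> complex_of_real (measure N {a<..b})"
    using Levy_Inversion[OF ab na nb] unfolding G_def by simp
  have "norm (complex_of_real (measure N {a<..b})) \<le> (b - a) / lam"
    by (rule LIMSEQ_le_const2[OF tendsto_norm[OF lim]]) (use bnd in auto)
  then show ?thesis by simp
qed

lemma ball_bound:
  fixes N :: "real measure" and lam c rho :: real
  assumes N: "real_distribution N" and lam: "lam > 0"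
   and ch: "\<And>u. cmod (char N u) \<le> 2 / (1 + (lam*u)^2)"
   and rho: "rho \<ge> 0"
  shows "measure N {c - rho .. c + rho} \<le> 2 * rho / lam"
proof (rule field_le_epsilon)
  interpret real_distribution N by fact
  fix e :: real assume e: "e > 0"
  define eta where "eta = e * lam / 2"
  have eta: "eta > 0" using e lam by (simp add: eta_def)
  have ex: "\<exists>x\<in>{p<..<q}. measure N {x} = 0" if "p < q" for p q
  proof (rule ccontr)
    assume "\<not> ?thesis"
    then have "{p<..<q} \<subseteq> {x. measure N {x} > 0}"
      using measure_nonneg[of N] by (auto simp: less_le)
    then have "countable {p<..<q}" using countable_atoms countable_subset by blast
    then show False using uncountable_open_interval that by blast
  qed
  obtain a' where a': "a' \<in> {c - rho - eta<..<c - rho}" "measure N {a'} = 0" using ex[of "c - rho - eta" "c - rho"] eta by auto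
  obtain b' where b': "b' \<in> {c + rho<..<c + rho + eta}" "measure N {b'} = 0" using ex[of "c + rho" "c + rho + eta"] eta by auto
  have "measure N {c - rho .. c + rho} \<le> measure N {a'<..b'}"
    using a' b' by (intro finite_measure_mono) auto
  also have "\<dots> \<le> (b' - a') / lam"
    using a' b' rho by (intro inv_bound[OF N lam ch]) auto
  also have "\<dots> \<le> (2 * rho + 2 * eta) / lam"
    using a' b' lam by (intro divide_right_mono) auto
  also have "\<dots> = 2 * rho / lam + e" using lam by (simp add: eta_def field_simps)
  finally show "measure N {c - rho .. c + rho} \<le> 2 * rho / lam + e" .
qed

lemma stable_char_bound:
  fixes alpha s u :: real
  assumes a: "alpha > 1" and s: "s > 0"
  shows "exp (- (\<bar>u\<bar> powr alpha) * s) \<le> 2 / (1 + (s powr (1/alpha) * u)^2)"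
proof -
  define w where "w = \<bar>u\<bar> * s powr (1/alpha)"
  have w0: "w \<ge> 0" by (simp add: w_def)
  have "w powr alpha = \<bar>u\<bar> powr alpha * (s powr (1/alpha)) powr alpha"
    unfolding w_def by (simp add: powr_mult)
  also have "(s powr (1/alpha)) powr alpha = s" using a s by (simp add: powr_powr)
  finally have wa: "w powr alpha = \<bar>u\<bar> powr alpha * s" .
  have sq: "(s powr (1/alpha) * u)^2 = w^2" by (simp add: w_def power2_eq_square)
  have "exp (- (w powr alpha)) \<le> 2 / (1 + w^2)"
  proof (cases "w \<le> 1")
    case True
    have e1: "exp (- (w powr alpha)) \<le> 1" by simp
    have "w^2 \<le> 1" using True w0 by (simp add: power_le_one)
    then have "1 \<le> 2 / (1 + w^2)" by (subst le_divide_eq) (auto simp: add_pos_nonneg)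
    then show ?thesis using e1 by linarith
  next
    case False
    have "w powr 1 \<le> w powr alpha" by (rule powr_mono) (use a False in auto)
    then have "w \<le> w powr alpha" using False by simp
    then have "exp (- (w powr alpha)) \<le> exp (- w)" by simp
    also have "\<dots> \<le> 2 / (1 + w^2)" by (rule exp_bound2[OF w0])
    finally show ?thesis .
  qed
  then show ?thesis using wa sq by simp
qed

lemma main_bound:
  fixes N :: "real measure"
  assumes N: "real_distribution N" and "u > 0"
  shows "Re (CLBINT t:{-u..u}. 1 - char N t) \<ge> u * measure N {x. abs x \<ge> 2 / u}"
proof -
    interpret Mn: real_distribution N by fact
    interpret P: pair_sigma_finite "N" lborel ..
    have *: "\<And>u x. u > 0 \<Longrightarrow> x \<noteq> 0 \<Longrightarrow> (CLBINT t:{-u..u}. 1 - iexp (t * x)) =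
      2 * (u  - sin (u * x) / x)"
  proof -
    fix u :: real and x :: real
    assume "u > 0" and "x \<noteq> 0"
    hence "(CLBINT t:{-u..u}. 1 - iexp (t * x)) = (CLBINT t=-u..u. 1 - iexp (t * x))"
      by (subst interval_integral_Icc, auto)
    also have "\<dots> = (CLBINT t=-u..ereal 0. 1 - iexp (t * x)) + (CLBINT t= ereal 0..u. 1 - iexp (t * x))"
      using \<open>u > 0\<close>
      by (subst interval_integral_sum; force simp add: interval_integrable_isCont)
    also have "\<dots> = (CLBINT t=ereal 0..u. 1 - iexp (t * -x)) + (CLBINT t=ereal 0..u. 1 - iexp (t * x))"
      by (subst interval_integral_reflect, auto)
    also have "... = CLBINT xa=ereal 0..ereal u. 1 - iexp (xa * - x) + (1 - iexp (xa * x))"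
      by (subst interval_lebesgue_integral_add (2) [symmetric]) (auto simp: interval_integrable_isCont)
    also have "\<dots> = (LBINT t=ereal 0..u. 2 - 2 * cos (t * x))"
      unfolding exp_Euler cos_of_real by (simp flip: interval_lebesgue_integral_of_real)
    also have "\<dots> = 2 * u - 2 * sin (u * x) / x"
      by (subst interval_lebesgue_integral_diff)
         (auto intro!: interval_integrable_isCont
               simp: interval_lebesgue_integral_of_real integral_cos [OF \<open>x \<noteq> 0\<close>] mult.commute[of _ x])
    finally show "(CLBINT t:{-u..u}. 1 - iexp (t * x)) = 2 * (u  - sin (u * x) / x)"
      by (simp add: field_simps)
  qed
    have Mn1 [simp]: "measure N UNIV = 1" by (metis Mn.prob_space Mn.space_eq_univ)
    have Mn2 [simp]: "\<And>x. complex_integrable N (\<lambda>t. exp (\<i> * complex_of_real (x * t)))"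
      by (rule Mn.integrable_const_bound [where B = 1], auto)
    have Mn3: "set_integrable (N \<Otimes>\<^sub>M lborel) (UNIV \<times> {- u..u}) (\<lambda>a. 1 - exp (\<i> * complex_of_real (snd a * fst a)))"
      using \<open>0 < u\<close>
      unfolding set_integrable_def
      by (intro integrableI_bounded_set_indicator [where B="2"])
         (auto simp: lborel.emeasure_pair_measure_Times ennreal_mult_less_top not_less top_unique
               split: split_indicator
               intro!: order_trans [OF norm_triangle_ineq4])
    have "(CLBINT t:{-u..u}. 1 - char N t) =
        (CLBINT t:{-u..u}. (CLINT x | N. 1 - iexp (t * x)))"
      unfolding char_def by (rule set_lebesgue_integral_cong, auto simp del: of_real_mult)
    also have "\<dots> = (CLBINT t. (CLINT x | N. indicator {-u..u} t *\<^sub>R (1 - iexp (t * x))))"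
      unfolding set_lebesgue_integral_def
      by (rule Bochner_Integration.integral_cong) (auto split: split_indicator)
    also have "\<dots> = (CLINT x | N. (CLBINT t:{-u..u}. 1 - iexp (t * x)))"
      using Mn3 by (subst P.Fubini_integral) (auto simp: indicator_times split_beta' set_integrable_def set_lebesgue_integral_def)
    also have "\<dots> = (CLINT x | N. (if x = 0 then 0 else 2 * (u  - sin (u * x) / x)))"
      using \<open>u > 0\<close> by (intro Bochner_Integration.integral_cong, auto simp add: * simp del: of_real_mult)
    also have "\<dots> = (LINT x | N. (if x = 0 then 0 else 2 * (u  - sin (u * x) / x)))"
      by (rule integral_complex_of_real)
    finally have "Re (CLBINT t:{-u..u}. 1 - char N t) =
       (LINT x | N. (if x = 0 then 0 else 2 * (u  - sin (u * x) / x)))" by simp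
    also have "\<dots> \<ge> (LINT x : {x. abs x \<ge> 2 / u} | N. u)"
    proof -
      have "complex_integrable N (\<lambda>x. CLBINT t:{-u..u}. 1 - iexp (snd (x, t) * fst (x, t)))"
        using Mn3 unfolding set_integrable_def set_lebesgue_integral_def
        by (intro P.integrable_fst) (simp add: indicator_times split_beta')
      hence "complex_integrable N (\<lambda>x. if x = 0 then 0 else 2 * (u  - sin (u * x) / x))"
        using \<open>u > 0\<close>
        unfolding set_integrable_def
        by (subst Bochner_Integration.integrable_cong) (auto simp add: * simp del: of_real_mult)
      hence **: "integrable N (\<lambda>x. if x = 0 then 0 else 2 * (u  - sin (u * x) / x))"
        unfolding complex_of_real_integrable_eq .
      have "2 * sin x \<le> x" if "2 \<le> x" for x :: real
        by (rule order_trans[OF _ \<open>2 \<le> x\<close>]) auto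
      moreover have "x \<le> 2 * sin x" if "x \<le> - 2" for x :: real
        by (rule order_trans[OF \<open>x \<le> - 2\<close>]) auto
      moreover have "x < 0 \<Longrightarrow> x \<le> sin x" for x :: real
        using sin_x_le_x[of "-x"] by simp
      ultimately show ?thesis
        using \<open>u > 0\<close> unfolding set_lebesgue_integral_def
        by (intro integral_mono [OF _ **])
           (auto simp: divide_simps sin_x_le_x mult.commute[of u] mult_neg_pos top_unique less_top[symmetric]
                 split: split_indicator)
    qed
    also (xtrans) have "(LINT x : {x. abs x \<ge> 2 / u} | N. u) = u * measure N {x. abs x \<ge> 2 / u}"
      unfolding set_lebesgue_integral_def
      by (simp add: Mn.emeasure_eq_measure)
    finally show "Re (CLBINT t:{-u..u}. 1 - char N t) \<ge> u * measure N {x. abs x \<ge> 2 / u}" .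
qed

lemma tail_bound:
  fixes N :: "real measure" and alpha d u :: real
  assumes N: "real_distribution N" and d: "d \<ge> 0" and a0: "alpha \<ge> 0"
   and ch: "\<And>v. char N v = complex_of_real (exp (- (\<bar>v\<bar> powr alpha) * d))"
   and u: "u > 0"
  shows "measure N {x. \<bar>x\<bar> \<ge> 2/u} \<le> 2 * (u powr alpha * d)"
proof -
  interpret real_distribution N by fact
  have "u * measure N {x. \<bar>x\<bar> \<ge> 2/u} \<le> Re (CLBINT t:{-u..u}. 1 - char N t)"
    by (rule main_bound[OF N u])
  also have "\<dots> \<le> cmod (CLBINT t:{-u..u}. 1 - char N t)" by (rule complex_Re_le_cmod)
  also have "\<dots> \<le> (LBINT t:{-u..u}. cmod (1 - char N t))"
    by (rule set_integral_norm_bound) (unfold set_integrable_def, intro borel_integrable_compact[OF compact_Icc] continuous_at_imp_continuous_on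
                continuous_intros ballI isCont_char continuous_intros)
  also have "\<dots> \<le> (LBINT t:{-u..u}. u powr alpha * d)"
  proof (rule set_integral_mono)
    show "set_integrable lborel {-u..u} (\<lambda>t. cmod (1 - char N t))"
      unfolding set_integrable_def
      by (intro borel_integrable_compact[OF compact_Icc] continuous_at_imp_continuous_on
                continuous_intros ballI isCont_char continuous_intros)
    show "set_integrable lborel {-u..u} (\<lambda>t. u powr alpha * d)"
      unfolding set_integrable_def
      by (intro borel_integrable_compact[OF compact_Icc] continuous_intros)
    fix t assume t: "t \<in> {-u..u}"
    have "cmod (1 - char N t) = 1 - exp (- (\<bar>t\<bar> powr alpha) * d)"
    proof -
      have "0 \<le> \<bar>t\<bar> powr alpha * d" using d by simp
      then have e: "exp (- (\<bar>t\<bar> powr alpha) * d) \<le> 1" by simp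
      have "cmod (1 - complex_of_real (exp (- (\<bar>t\<bar> powr alpha) * d))) = \<bar>1 - exp (- (\<bar>t\<bar> powr alpha) * d)\<bar>"
        by (metis norm_of_real of_real_1 of_real_diff)
      then show ?thesis unfolding ch using e by simp
    qed
    also have "\<dots> \<le> \<bar>t\<bar> powr alpha * d"
      using exp_ge_add_one_self[of "- (\<bar>t\<bar> powr alpha) * d"] by simp
    also have "\<dots> \<le> u powr alpha * d"
      using t d a0 by (intro mult_right_mono powr_mono2) auto
    finally show "cmod (1 - char N t) \<le> u powr alpha * d" .
  qed
  also have "\<dots> = 2 * u * (u powr alpha * d)"
    using u unfolding set_lebesgue_integral_def by simp
  finally show ?thesis using u by (simp add: mult.assoc)
qed

lemma dyadic:
  fixes x :: real assumes "x \<ge> 1"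
  shows "\<exists>j::nat. 2^j \<le> x \<and> x < 2^(Suc j)"
proof -
  obtain n :: nat where n: "x < 2^n" using real_arch_pow[of 2 x] by auto
  define m where "m = (LEAST n::nat. x < 2^n)"
  have m: "x < 2^m" unfolding m_def by (rule LeastI[of _ n]) (rule n)
  have "m \<noteq> 0"
  proof
    assume "m = 0" with m assms show False by simp
  qed
  then obtain j where j: "m = Suc j" by (cases m) auto
  have "\<not> x < 2^j" using not_less_Least[of j "\<lambda>n. x < 2^n"] j unfolding m_def by auto
  then show ?thesis using m j by (intro exI[of _ j]) auto
qed

lemma cross_bound:
  fixes M :: "'a measure" and Y Z :: "'a \<Rightarrow> real" and alpha s d c :: real
  assumes M: "prob_space M" and Ym: "Y \<in> borel_measurable M" and Zm: "Z \<in> borel_measurable M"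
   and indep: "\<And>A B. A \<in> sets borel \<Longrightarrow> B \<in> sets borel \<Longrightarrow>
        measure M {\<omega>\<in>space M. Y \<omega> \<in> A \<and> Z \<omega> \<in> B} = measure M {\<omega>\<in>space M. Y \<omega> \<in> A} * measure M {\<omega>\<in>space M. Z \<omega> \<in> B}"
   and a: "alpha > 1" and s: "s > 0" and d: "d > 0"
   and chY: "\<And>u. char (distr M borel Y) u = complex_of_real (exp (- (\<bar>u\<bar> powr alpha) * s))"
   and chZ: "\<And>u. char (distr M borel Z) u = complex_of_real (exp (- (\<bar>u\<bar> powr alpha) * d))"
  shows "measure M {\<omega>\<in>space M. \<bar>Y \<omega> - c\<bar> \<le> \<bar>Z \<omega>\<bar>}
     \<le> (2 + 8 * 2 powr alpha / (1 - 2 / 2 powr alpha)) * (d / s) powr (1 / alpha)"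
proof -
  interpret prob_space M by fact
  have NY: "real_distribution (distr M borel Y)" using Ym by simp
  have NZ: "real_distribution (distr M borel Z)" using Zm by simp
  define lamY where "lamY = s powr (1/alpha)"
  have lamY: "lamY > 0" using s by (simp add: lamY_def)
  define r where "r = d powr (1/alpha)"
  have r: "r > 0" using d by (simp add: r_def)
  have rpow: "r powr alpha = d" using a d by (simp add: r_def powr_powr)
  define q where "q = (d / s) powr (1 / alpha)"
  have q: "q = r / lamY" using d s by (simp add: q_def r_def lamY_def powr_divide)
  have PY: "prob {\<omega>\<in>space M. \<bar>Y \<omega> - c\<bar> \<le> rho} \<le> 2 * rho / lamY" if rho: "rho \<ge> 0" for rho
  proof -
    have "prob {\<omega>\<in>space M. \<bar>Y \<omega> - c\<bar> \<le> rho} = measure (distr M borel Y) {c - rho .. c + rho}"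
      using Ym by (subst measure_distr) (auto intro!: arg_cong[where f=prob] simp: abs_le_iff)
    also have "\<dots> \<le> 2 * rho / lamY"
      by (rule ball_bound[OF NY lamY _ rho]) (use stable_char_bound[OF a s] chY in \<open>simp add: lamY_def\<close>)
    finally show ?thesis .
  qed
  have PZ: "prob {\<omega>\<in>space M. x \<le> \<bar>Z \<omega>\<bar>} \<le> 2 * ((2 / x) powr alpha * d)" if x: "x > 0" for x
  proof -
    have "prob {\<omega>\<in>space M. x \<le> \<bar>Z \<omega>\<bar>} = measure (distr M borel Z) {y. \<bar>y\<bar> \<ge> 2 / (2 / x)}"
      using Zm x by (subst measure_distr) (auto intro!: arg_cong[where f=prob])
    also have "\<dots> \<le> 2 * ((2 / x) powr alpha * d)"
      by (rule tail_bound[OF NZ _ _ chZ]) (use d a x in auto)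
    finally show ?thesis .
  qed
  define R where "R j = 2^j * r" for j :: nat
  have R: "R j > 0" for j using r by (simp add: R_def)
  define A where "A j = {\<omega>\<in>space M. \<bar>Y \<omega> - c\<bar> \<le> 2 * R j \<and> R j \<le> \<bar>Z \<omega>\<bar>}" for j
  define B where "B = {\<omega>\<in>space M. \<bar>Y \<omega> - c\<bar> \<le> r}"
  define rho where "rho = 2 / 2 powr alpha"
  have rho0: "rho \<ge> 0" by (simp add: rho_def)
  have rho1: "rho < 1"
  proof -
    have "2 powr 1 < 2 powr alpha" using a by (intro powr_less_mono) auto
    then show ?thesis by (simp add: rho_def)
  qed
  have Am: "A j \<in> sets M" for j unfolding A_def using Ym Zm by measurable
  have Bm: "B \<in> sets M" unfolding B_def using Ym by measurable
  have PA: "prob (A j) \<le> 8 * 2 powr alpha * q * rho ^ j" for j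
  proof -
    have "prob (A j) = prob {\<omega>\<in>space M. \<bar>Y \<omega> - c\<bar> \<le> 2 * R j} * prob {\<omega>\<in>space M. R j \<le> \<bar>Z \<omega>\<bar>}"
      using indep[of "{y. \<bar>y - c\<bar> \<le> 2 * R j}" "{z. R j \<le> \<bar>z\<bar>}"] unfolding A_def by simp
    also have "\<dots> \<le> (2 * (2 * R j) / lamY) * (2 * ((2 / R j) powr alpha * d))"
      using R[of j] lamY by (intro mult_mono PY PZ) auto
    also have "\<dots> = 8 * 2 powr alpha * q * rho ^ j"
    proof -
      have p2: "(2::real) ^ j = 2 powr (real j)" by (simp add: powr_realpow)
      have "(R j) powr alpha = ((2::real) ^ j) powr alpha * r powr alpha"
        unfolding R_def using r by (simp add: powr_mult)
      also have "((2::real) ^ j) powr alpha = (2 powr alpha) ^ j"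
        unfolding p2 by (simp add: powr_powr powr_power mult.commute)
      finally have h1: "(R j) powr alpha = (2 powr alpha) ^ j * d" using rpow by simp
      have h2: "(2 / R j) powr alpha = 2 powr alpha / ((2 powr alpha) ^ j * d)"
        using R[of j] by (simp add: powr_divide h1)
      have "(2 * (2 * R j) / lamY) * (2 * ((2 / R j) powr alpha * d))
          = 8 * 2 powr alpha * (r / lamY) * (2 ^ j / (2 powr alpha) ^ j)"
        unfolding h2 using d lamY by (simp add: R_def field_simps)
      also have "\<dots> = 8 * 2 powr alpha * q * rho ^ j"
        by (simp add: q rho_def power_divide)
      finally show ?thesis .
    qed
    finally show ?thesis .
  qed
  have cover: "{\<omega>\<in>space M. \<bar>Y \<omega> - c\<bar> \<le> \<bar>Z \<omega>\<bar>} \<subseteq> B \<union> (\<Union>j. A j)"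
  proof
    fix \<omega> assume w: "\<omega> \<in> {\<omega>\<in>space M. \<bar>Y \<omega> - c\<bar> \<le> \<bar>Z \<omega>\<bar>}"
    show "\<omega> \<in> B \<union> (\<Union>j. A j)"
    proof (cases "\<bar>Z \<omega>\<bar> \<le> r")
      case True then show ?thesis using w by (auto simp: B_def)
    next
      case False
      then have "\<bar>Z \<omega>\<bar> / r \<ge> 1" using r by simp
      then obtain j :: nat where j: "2^j \<le> \<bar>Z \<omega>\<bar> / r" "\<bar>Z \<omega>\<bar> / r < 2^(Suc j)"
        using dyadic by blast
      have "R j \<le> \<bar>Z \<omega>\<bar>" using j(1) r by (simp add: R_def field_simps)
      moreover have "\<bar>Z \<omega>\<bar> \<le> 2 * R j" using j(2) r by (simp add: R_def field_simps)
      ultimately have "\<omega> \<in> A j" using w by (auto simp: A_def)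
      then show ?thesis by blast
    qed
  qed
  have sumg: "summable (\<lambda>j. 8 * 2 powr alpha * q * rho ^ j)"
    using rho0 rho1 by (intro summable_mult summable_geometric) auto
  have sumA: "summable (\<lambda>j. prob (A j))"
    by (rule summable_comparison_test'[OF sumg]) (use PA in auto)
  have "prob {\<omega>\<in>space M. \<bar>Y \<omega> - c\<bar> \<le> \<bar>Z \<omega>\<bar>} \<le> prob (B \<union> (\<Union>j. A j))"
    using cover Am Bm by (intro finite_measure_mono) auto
  also have "\<dots> \<le> prob B + prob (\<Union>j. A j)"
    using Am Bm by (intro measure_Un_le) auto
  also have "prob (\<Union>j. A j) \<le> (\<Sum>j. prob (A j))"
    using Am sumA by (intro finite_measure_subadditive_countably) auto
  also have "\<dots> \<le> (\<Sum>j. 8 * 2 powr alpha * q * rho ^ j)"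
    by (rule suminf_le[OF PA sumA sumg])
  also have "\<dots> = 8 * 2 powr alpha * q * (1 / (1 - rho))"
    using rho0 rho1 by (simp add: suminf_mult suminf_geometric)
  also have "prob B \<le> 2 * r / lamY" unfolding B_def using r by (intro PY) auto
  finally have "prob {\<omega>\<in>space M. \<bar>Y \<omega> - c\<bar> \<le> \<bar>Z \<omega>\<bar>} \<le> 2 * q + 8 * 2 powr alpha * q * (1 / (1 - rho))"
    by (simp add: q)
  also have "\<dots> = (2 + 8 * 2 powr alpha / (1 - 2 / 2 powr alpha)) * (d / s) powr (1 / alpha)"
    by (simp add: q_def rho_def field_simps)
  finally show ?thesis .
qed



lemma ind_ab_measurable[measurable]: "ind_ab a b \<in> borel_measurable borel"
  unfolding ind_ab_def by measurable

lemma ind_ab_01: "ind_ab a b x = 0 \<or> ind_ab a b x = 1"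
  by (simp add: ind_ab_def)

lemma ind_cross:
  fixes a b :: ereal and y z :: real
  assumes "ind_ab a b (y + z) \<noteq> ind_ab a b y"
  shows "\<bar>y - real_of_ereal a\<bar> \<le> \<bar>z\<bar> \<or> \<bar>y - real_of_ereal b\<bar> \<le> \<bar>z\<bar>"
  using assms unfolding ind_ab_def
  by (cases a; cases b) (auto split: if_splits)


definition C1 :: "real \<Rightarrow> real" where
  "C1 alpha = 2 + 8 * 2 powr alpha / (1 - 2 / 2 powr alpha)"

lemma C1_pos: "alpha > 1 \<Longrightarrow> C1 alpha \<ge> 0"
proof -
  assume a: "alpha > 1"
  have "2 powr 1 < 2 powr alpha" using a by (intro powr_less_mono) auto
  then have "2 / 2 powr alpha < 1" by simp
  then show ?thesis unfolding C1_def by (intro add_nonneg_nonneg divide_nonneg_pos) auto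
qed

lemma key:
  fixes M :: "'a measure" and X :: "real \<Rightarrow> 'a \<Rightarrow> real"
  assumes L: "sym_stable_levy M alpha X" and a: "1 < alpha" and s: "0 < s" "s \<le> t"
    and t2: "0 \<le> t2" "0 \<le> s2"
  shows "\<bar>\<integral>\<omega>. (ind_ab a b (X t \<omega>) - ind_ab a b (X s \<omega>)) * (ind_ab a b (X t2 \<omega>) - ind_ab a b (X s2 \<omega>)) \<partial>M\<bar>
     \<le> 2 * C1 alpha * ((t - s) / s) powr (1 / alpha)"
proof -
  have P: "prob_space M" and Xm: "\<And>u. u \<ge> 0 \<Longrightarrow> X u \<in> borel_measurable M"
    and X0: "AE \<omega> in M. X 0 \<omega> = 0"
    and IND: "\<And>(ts :: nat \<Rightarrow> real) m. 0 \<le> ts 0 \<Longrightarrow> (\<forall>i<m. ts i \<le> ts (Suc i)) \<Longrightarrow>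
        prob_space.indep_vars M (\<lambda>_. borel) (\<lambda>i \<omega>. X (ts (Suc i)) \<omega> - X (ts i) \<omega>) {..<m}"
    and CH: "\<And>s t u. 0 \<le> s \<Longrightarrow> s \<le> t \<Longrightarrow>
        char (distr M borel (\<lambda>\<omega>. X t \<omega> - X s \<omega>)) u = complex_of_real (exp (- (\<bar>u\<bar> powr alpha) * (t - s)))"
    using L unfolding sym_stable_levy_def by auto
  interpret prob_space M by fact
  have [measurable]: "X 0 \<in> borel_measurable M" "X s \<in> borel_measurable M" "X t \<in> borel_measurable M"
     "X t2 \<in> borel_measurable M" "X s2 \<in> borel_measurable M"
    using Xm s t2 by auto
  define f where "f \<omega> = (ind_ab a b (X t \<omega>) - ind_ab a b (X s \<omega>)) * (ind_ab a b (X t2 \<omega>) - ind_ab a b (X s2 \<omega>))" for \<omega>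
  have fm: "f \<in> borel_measurable M" unfolding f_def by measurable
  have absdiff: "\<bar>ind_ab a b x - ind_ab a b y\<bar> \<le> 1" for x y
    using ind_ab_01[of a b x] ind_ab_01[of a b y] by auto
  have fb: "\<bar>f \<omega>\<bar> \<le> \<bar>ind_ab a b (X t \<omega>) - ind_ab a b (X s \<omega>)\<bar>" for \<omega>
    unfolding f_def abs_mult using absdiff[of "X t2 \<omega>" "X s2 \<omega>"]
    by (intro mult_left_le) auto
  show ?thesis
  proof (cases "s = t")
    case True
    then show ?thesis using C1_pos[OF a] by (simp add: f_def)
  next
    case False
    then have st: "s < t" using s by auto
    define Y where "Y \<omega> = X s \<omega> - X 0 \<omega>" for \<omega>
    define Z where "Z \<omega> = X t \<omega> - X s \<omega>" for \<omega>
    have Ym[measurable]: "Y \<in> borel_measurable M" unfolding Y_def by measurable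
    have Zm[measurable]: "Z \<in> borel_measurable M" unfolding Z_def by measurable
    define ts :: "nat \<Rightarrow> real" where "ts i = (if i = 0 then 0 else if i = 1 then s else t)" for i
    have "indep_vars (\<lambda>_. borel) (\<lambda>i \<omega>. X (ts (Suc i)) \<omega> - X (ts i) \<omega>) {..<2}"
      using IND[of ts 2] s unfolding ts_def by (auto simp: less_2_cases_iff)
    then have IS: "indep_sets (\<lambda>i. {(\<lambda>\<omega>. X (ts (Suc i)) \<omega> - X (ts i) \<omega>) -` A \<inter> space M | A. A \<in> sets borel}) {..<2}"
      unfolding indep_vars_def2 by auto
    have indep: "measure M {\<omega>\<in>space M. Y \<omega> \<in> A \<and> Z \<omega> \<in> B} = measure M {\<omega>\<in>space M. Y \<omega> \<in> A} * measure M {\<omega>\<in>space M. Z \<omega> \<in> B}"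
      if A: "A \<in> sets borel" and B: "B \<in> sets borel" for A B
    proof -
      define F where "F j = (if j = 0 then Y -` A \<inter> space M else Z -` B \<inter> space M)" for j :: nat
      have "prob (\<Inter>j\<in>{0,1}. F j) = (\<Prod>j\<in>{0,1}. prob (F j))"
      proof (rule indep_setsD[OF IS])
        show "\<forall>j\<in>{0, 1}. F j \<in> {(\<lambda>\<omega>. X (ts (Suc j)) \<omega> - X (ts j) \<omega>) -` A \<inter> space M |A. A \<in> sets borel}"
          using A B by (auto simp: F_def ts_def Y_def Z_def)
      qed auto
      moreover have "(\<Inter>j\<in>{0,1}. F j) = {\<omega>\<in>space M. Y \<omega> \<in> A \<and> Z \<omega> \<in> B}" by (auto simp: F_def)
      moreover have "F 0 = {\<omega>\<in>space M. Y \<omega> \<in> A}" "F 1 = {\<omega>\<in>space M. Z \<omega> \<in> B}" by (auto simp: F_def)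
      ultimately show ?thesis by simp
    qed
    have chY: "char (distr M borel Y) u = complex_of_real (exp (- (\<bar>u\<bar> powr alpha) * s))" for u
      using CH[of 0 s u] s unfolding Y_def by simp
    have chZ: "char (distr M borel Z) u = complex_of_real (exp (- (\<bar>u\<bar> powr alpha) * (t - s)))" for u
      using CH[of s t u] s unfolding Z_def by simp
    define E where "E c = {\<omega>\<in>space M. \<bar>Y \<omega> - c\<bar> \<le> \<bar>Z \<omega>\<bar>}" for c
    have Em: "E c \<in> sets M" for c unfolding E_def by measurable
    have PE: "prob (E c) \<le> C1 alpha * ((t - s) / s) powr (1 / alpha)" for c
      unfolding E_def C1_def
      by (rule cross_bound[OF P Ym Zm indep a s(1)]) (use st chY chZ in auto)
    let ?U = "E (real_of_ereal a) \<union> E (real_of_ereal b)"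
    have AEb: "AE \<omega> in M. \<bar>f \<omega>\<bar> \<le> indicator ?U \<omega>"
      using X0 AE_space
    proof eventually_elim
      case (elim \<omega>)
      show ?case
      proof (cases "\<omega> \<in> space M \<and> ind_ab a b (X t \<omega>) \<noteq> ind_ab a b (X s \<omega>)")
        case True
        have "X t \<omega> = Y \<omega> + Z \<omega>" "X s \<omega> = Y \<omega>" using elim by (auto simp: Y_def Z_def)
        then have "\<omega> \<in> ?U" using ind_cross[of a b "Y \<omega>" "Z \<omega>"] True by (auto simp: E_def)
        then show ?thesis using fb[of \<omega>] absdiff[of "X t \<omega>" "X s \<omega>"] by simp
      next
        case False
        with elim have "f \<omega> = 0" by (simp add: f_def)
        then show ?thesis by simp
      qed
    qed
    have "\<bar>integral\<^sup>L M f\<bar> \<le> integral\<^sup>L M (\<lambda>\<omega>. \<bar>f \<omega>\<bar>)" by (rule integral_abs_bound)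
    also have "\<dots> \<le> integral\<^sup>L M (indicator ?U)"
    proof (rule integral_mono_AE[OF _ _ AEb])
      show "integrable M (\<lambda>\<omega>. \<bar>f \<omega>\<bar>)"
      proof (rule integrable_const_bound[where B=1])
        show "AE x in M. norm \<bar>f x\<bar> \<le> 1"
          using fb absdiff by (intro AE_I2) (auto intro: order_trans)
      qed (use fm in simp)
      show "integrable M (indicat_real ?U)" using Em by (intro integrable_real_indicator) (auto simp: less_top[symmetric])
    qed
    also have "\<dots> = prob ?U" using Em by simp
    also have "\<dots> \<le> prob (E (real_of_ereal a)) + prob (E (real_of_ereal b))"
      using Em by (intro measure_Un_le) auto
    also have "\<dots> \<le> 2 * C1 alpha * ((t - s) / s) powr (1 / alpha)"
      using PE[of "real_of_ereal a"] PE[of "real_of_ereal b"] by simp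
    finally show ?thesis unfolding f_def .
  qed
qed


lemma ineq_i:
  fixes s T D alpha eps :: real and n :: nat
  assumes s: "0 < s" "s \<le> T" and D: "0 < D" and a: "0 < alpha" and e: "0 < eps" and n: "1 \<le> n"
  shows "(D / s) powr (1 / alpha) \<le> max 1 (T powr (eps / alpha)) *
            (s powr (-(1 + eps) / alpha) * D powr (1 / alpha) + s powr (-1 - eps / alpha) * D * ln (real n))"
proof -
  have "(D / s) powr (1 / alpha) = D powr (1 / alpha) * s powr (- (1 / alpha))"
    using s D by (simp add: powr_divide powr_minus_divide)
  also have "s powr (- (1 / alpha)) = s powr (-(1 + eps) / alpha) * s powr (eps / alpha)"
    using s by (simp add: powr_add[symmetric] add_divide_distrib[symmetric] diff_divide_distrib[symmetric])
  finally have 1: "(D / s) powr (1 / alpha) = (s powr (-(1 + eps) / alpha) * D powr (1 / alpha)) * s powr (eps / alpha)"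
    by simp
  have "s powr (eps / alpha) \<le> T powr (eps / alpha)" using s a e by (intro powr_mono2) auto
  also have "\<dots> \<le> max 1 (T powr (eps / alpha))" by simp
  finally have 2: "s powr (eps / alpha) \<le> max 1 (T powr (eps / alpha))" .
  have "(D / s) powr (1 / alpha) \<le> max 1 (T powr (eps / alpha)) * (s powr (-(1 + eps) / alpha) * D powr (1 / alpha))"
    unfolding 1 using 2 by (subst mult.commute) (intro mult_right_mono, auto)
  also have "\<dots> \<le> max 1 (T powr (eps / alpha)) *
            (s powr (-(1 + eps) / alpha) * D powr (1 / alpha) + s powr (-1 - eps / alpha) * D * ln (real n))"
    using n D by (intro mult_left_mono) auto
  finally show ?thesis .
qed

lemma ineq_ii:
  fixes s D alpha eps :: real
  assumes s: "0 < s" and D: "0 < D" and a: "0 < alpha"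
  shows "(D / s) powr (1 / alpha) \<le> D powr (1 / alpha) * (s powr (-1 / alpha) + s powr (-(1 + eps) / alpha))
            + D powr (1 - eps / alpha) * s powr (-1 - eps / alpha)
            + D powr (1 - 2 * eps / alpha) * s powr (-1)"
proof -
  have "(D / s) powr (1 / alpha) = D powr (1 / alpha) * s powr (-1 / alpha)"
    using s D by (simp add: powr_divide powr_minus_divide)
  also have "\<dots> \<le> D powr (1 / alpha) * (s powr (-1 / alpha) + s powr (-(1 + eps) / alpha))"
    by (intro mult_left_mono) auto
  finally show ?thesis by (smt (verit) powr_ge_zero mult_nonneg_nonneg)
qed


lemma floor_grid:
  fixes D t :: real and k :: nat
  assumes D: "0 < D" and k: "1 \<le> k" and t: "real (k - 1) * D \<le> t" "t < real k * D"
  shows "D * real_of_int \<lfloor>t / D\<rfloor> = real (k - 1) * D"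
proof -
  have "real (k - 1) \<le> t / D" using t D by (simp add: le_divide_eq)
  moreover have "t / D < real (k - 1) + 1" using t D k by (simp add: divide_less_eq of_nat_diff)
  ultimately have "\<lfloor>t / D\<rfloor> = int (k - 1)" by (simp add: floor_eq_iff)
  then show ?thesis by simp
qed

lemma floor_nonneg_grid:
  fixes D t :: real
  assumes "0 < D" "0 \<le> t"
  shows "0 \<le> D * real_of_int \<lfloor>t / D\<rfloor>"
  using assms by simp

theorem lemma13:
  fixes \<alpha> :: real
  assumes "1 < \<alpha>" and "\<alpha> \<le> 2"
  shows "\<exists>\<epsilon>0>0. \<forall>\<epsilon>. 0 < \<epsilon> \<and> \<epsilon> < \<epsilon>0 \<longrightarrow> (\<exists>C. \<forall>(M :: 'a measure) X (T::real) (n::nat) (a::ereal) b.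
     sym_stable_levy M \<alpha> X \<and> T > 0 \<and> n \<ge> 1 \<and> a \<le> b \<longrightarrow>
     (let \<Delta> = T / real n; tk = (\<lambda>j::nat. real j * \<Delta>) in
      (\<forall>t t' k k'. 0 \<le> t \<and> t \<le> T \<and> 0 \<le> t' \<and> t' \<le> T \<and> 2 \<le> k \<and> k < k' \<and>
          tk (k - 1) \<le> t \<and> t < tk k \<and> tk (k' - 1) \<le> t' \<and> t' < tk k' \<longrightarrow>
          \<bar>E_tt M X a b \<Delta> t t'\<bar> \<le> C * max 1 (T powr (\<epsilon> / \<alpha>)) *
            (tk (k - 1) powr (-(1 + \<epsilon>) / \<alpha>) * \<Delta> powr (1 / \<alpha>)
             + tk (k - 1) powr (-1 - \<epsilon> / \<alpha>) * \<Delta> * ln (real n))) \<and>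
      (\<forall>t t' k. 0 \<le> t \<and> t \<le> T \<and> 0 \<le> t' \<and> t' \<le> T \<and> 2 \<le> k \<and>
          tk (k - 1) < t \<and> t < t' \<and> t' < tk k \<longrightarrow>
          \<bar>E_tt M X a b \<Delta> t t'\<bar> \<le> C * (
            \<Delta> powr (1 / \<alpha>) * (tk (k - 1) powr (-1 / \<alpha>) + tk (k - 1) powr (-(1 + \<epsilon>) / \<alpha>))
            + \<Delta> powr (1 - \<epsilon> / \<alpha>) * tk (k - 1) powr (-1 - \<epsilon> / \<alpha>)
            + \<Delta> powr (1 - 2 * \<epsilon> / \<alpha>) * tk (k - 1) powr (-1)))))"
proof -
  have a0: "0 < \<alpha>" using assms by simp
  have main: "sym_stable_levy M \<alpha> X \<and> T > 0 \<and> n \<ge> 1 \<and> a \<le> b \<longrightarrow>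
     (let \<Delta> = T / real n; tk = (\<lambda>j::nat. real j * \<Delta>) in
      (\<forall>t t' k k'. 0 \<le> t \<and> t \<le> T \<and> 0 \<le> t' \<and> t' \<le> T \<and> 2 \<le> k \<and> k < k' \<and>
          tk (k - 1) \<le> t \<and> t < tk k \<and> tk (k' - 1) \<le> t' \<and> t' < tk k' \<longrightarrow>
          \<bar>E_tt M X a b \<Delta> t t'\<bar> \<le> (2 * C1 \<alpha>) * max 1 (T powr (\<epsilon> / \<alpha>)) *
            (tk (k - 1) powr (-(1 + \<epsilon>) / \<alpha>) * \<Delta> powr (1 / \<alpha>)
             + tk (k - 1) powr (-1 - \<epsilon> / \<alpha>) * \<Delta> * ln (real n))) \<and>
      (\<forall>t t' k. 0 \<le> t \<and> t \<le> T \<and> 0 \<le> t' \<and> t' \<le> T \<and> 2 \<le> k \<and>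
          tk (k - 1) < t \<and> t < t' \<and> t' < tk k \<longrightarrow>
          \<bar>E_tt M X a b \<Delta> t t'\<bar> \<le> (2 * C1 \<alpha>) * (
            \<Delta> powr (1 / \<alpha>) * (tk (k - 1) powr (-1 / \<alpha>) + tk (k - 1) powr (-(1 + \<epsilon>) / \<alpha>))
            + \<Delta> powr (1 - \<epsilon> / \<alpha>) * tk (k - 1) powr (-1 - \<epsilon> / \<alpha>)
            + \<Delta> powr (1 - 2 * \<epsilon> / \<alpha>) * tk (k - 1) powr (-1))))"
    if e: "0 < \<epsilon>" for \<epsilon> and M :: "'a measure" and X T n a b
  proof (intro impI)
    assume H: "sym_stable_levy M \<alpha> X \<and> T > 0 \<and> n \<ge> 1 \<and> a \<le> b"
    then have L: "sym_stable_levy M \<alpha> X" and T: "T > 0" and n: "n \<ge> 1" by auto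
    define D where "D = T / real n"
    have D: "0 < D" using T n by (simp add: D_def)
    have C0: "0 \<le> 2 * C1 \<alpha>" using C1_pos[OF assms(1)] by simp
    have gen: "\<bar>E_tt M X a b D t t'\<bar> \<le> 2 * C1 \<alpha> * (D / (real (k - 1) * D)) powr (1 / \<alpha>)"
      if t: "real (k - 1) * D \<le> t" "t < real k * D" and k: "2 \<le> k" and t': "0 \<le> t'" for t t' k
    proof -
      define s where "s = real (k - 1) * D"
      have s0: "0 < s" using k D by (simp add: s_def)
      have fl: "D * real_of_int \<lfloor>t / D\<rfloor> = s" unfolding s_def by (rule floor_grid[OF D _ t]) (use k in auto)
      have "\<bar>E_tt M X a b D t t'\<bar> \<le> 2 * C1 \<alpha> * ((t - s) / s) powr (1 / \<alpha>)"
        unfolding E_tt_def fl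
        by (rule key[OF L assms(1) s0]) (use t s_def D t' in auto)
      also have "\<dots> \<le> 2 * C1 \<alpha> * (D / s) powr (1 / \<alpha>)"
      proof -
        have "real k * D = s + D" using k by (simp add: s_def of_nat_diff algebra_simps)
        then have "(t - s) / s \<le> D / s" using t s0 by (intro divide_right_mono) (auto simp: s_def)
        moreover have "0 \<le> (t - s) / s" using t(1)[folded s_def] s0 by (intro divide_nonneg_pos) auto
        ultimately show ?thesis using C0 a0 by (intro mult_left_mono powr_mono2) auto
      qed
      finally show ?thesis unfolding s_def .
    qed
    have part1: "\<forall>t t' k k'. 0 \<le> t \<and> t \<le> T \<and> 0 \<le> t' \<and> t' \<le> T \<and> 2 \<le> k \<and> k < k' \<and>
          real (k - 1) * D \<le> t \<and> t < real k * D \<and> real (k' - 1) * D \<le> t' \<and> t' < real k' * D \<longrightarrow>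
          \<bar>E_tt M X a b D t t'\<bar> \<le> (2 * C1 \<alpha>) * max 1 (T powr (\<epsilon> / \<alpha>)) *
            ((real (k - 1) * D) powr (-(1 + \<epsilon>) / \<alpha>) * D powr (1 / \<alpha>)
             + (real (k - 1) * D) powr (-1 - \<epsilon> / \<alpha>) * D * ln (real n))"
    proof (intro allI impI)
      fix t t' :: real and k k' :: nat
      assume h: "0 \<le> t \<and> t \<le> T \<and> 0 \<le> t' \<and> t' \<le> T \<and> 2 \<le> k \<and> k < k' \<and>
          real (k - 1) * D \<le> t \<and> t < real k * D \<and> real (k' - 1) * D \<le> t' \<and> t' < real k' * D"
      have s0: "0 < real (k - 1) * D" using h D by simp
      have sT: "real (k - 1) * D \<le> T" using h by linarith
      have "\<bar>E_tt M X a b D t t'\<bar> \<le> 2 * C1 \<alpha> * (D / (real (k - 1) * D)) powr (1 / \<alpha>)"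
        by (rule gen) (use h in auto)
      also have "\<dots> \<le> 2 * C1 \<alpha> * (max 1 (T powr (\<epsilon> / \<alpha>)) *
            ((real (k - 1) * D) powr (-(1 + \<epsilon>) / \<alpha>) * D powr (1 / \<alpha>)
             + (real (k - 1) * D) powr (-1 - \<epsilon> / \<alpha>) * D * ln (real n)))"
        by (intro mult_left_mono ineq_i[OF s0 sT D a0 e n] C0)
      finally show "\<bar>E_tt M X a b D t t'\<bar> \<le> (2 * C1 \<alpha>) * max 1 (T powr (\<epsilon> / \<alpha>)) *
            ((real (k - 1) * D) powr (-(1 + \<epsilon>) / \<alpha>) * D powr (1 / \<alpha>)
             + (real (k - 1) * D) powr (-1 - \<epsilon> / \<alpha>) * D * ln (real n))"
        by (simp only: mult.assoc)
    qed
    have part2: "\<forall>t t' k. 0 \<le> t \<and> t \<le> T \<and> 0 \<le> t' \<and> t' \<le> T \<and> 2 \<le> k \<and>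
          real (k - 1) * D < t \<and> t < t' \<and> t' < real k * D \<longrightarrow>
          \<bar>E_tt M X a b D t t'\<bar> \<le> (2 * C1 \<alpha>) * (
            D powr (1 / \<alpha>) * ((real (k - 1) * D) powr (-1 / \<alpha>) + (real (k - 1) * D) powr (-(1 + \<epsilon>) / \<alpha>))
            + D powr (1 - \<epsilon> / \<alpha>) * (real (k - 1) * D) powr (-1 - \<epsilon> / \<alpha>)
            + D powr (1 - 2 * \<epsilon> / \<alpha>) * (real (k - 1) * D) powr (-1))"
    proof (intro allI impI)
      fix t t' :: real and k :: nat
      assume h: "0 \<le> t \<and> t \<le> T \<and> 0 \<le> t' \<and> t' \<le> T \<and> 2 \<le> k \<and>
          real (k - 1) * D < t \<and> t < t' \<and> t' < real k * D"
      have s0: "0 < real (k - 1) * D" using h D by simp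
      have "\<bar>E_tt M X a b D t t'\<bar> \<le> 2 * C1 \<alpha> * (D / (real (k - 1) * D)) powr (1 / \<alpha>)"
        by (rule gen) (use h in auto)
      also have "\<dots> \<le> (2 * C1 \<alpha>) * (
            D powr (1 / \<alpha>) * ((real (k - 1) * D) powr (-1 / \<alpha>) + (real (k - 1) * D) powr (-(1 + \<epsilon>) / \<alpha>))
            + D powr (1 - \<epsilon> / \<alpha>) * (real (k - 1) * D) powr (-1 - \<epsilon> / \<alpha>)
            + D powr (1 - 2 * \<epsilon> / \<alpha>) * (real (k - 1) * D) powr (-1))"
        by (intro mult_left_mono ineq_ii[OF s0 D a0] C0)
      finally show "\<bar>E_tt M X a b D t t'\<bar> \<le> (2 * C1 \<alpha>) * (
            D powr (1 / \<alpha>) * ((real (k - 1) * D) powr (-1 / \<alpha>) + (real (k - 1) * D) powr (-(1 + \<epsilon>) / \<alpha>))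
            + D powr (1 - \<epsilon> / \<alpha>) * (real (k - 1) * D) powr (-1 - \<epsilon> / \<alpha>)
            + D powr (1 - 2 * \<epsilon> / \<alpha>) * (real (k - 1) * D) powr (-1))" .
    qed
    show "let \<Delta> = T / real n; tk = (\<lambda>j::nat. real j * \<Delta>) in
      (\<forall>t t' k k'. 0 \<le> t \<and> t \<le> T \<and> 0 \<le> t' \<and> t' \<le> T \<and> 2 \<le> k \<and> k < k' \<and>
          tk (k - 1) \<le> t \<and> t < tk k \<and> tk (k' - 1) \<le> t' \<and> t' < tk k' \<longrightarrow>
          \<bar>E_tt M X a b \<Delta> t t'\<bar> \<le> (2 * C1 \<alpha>) * max 1 (T powr (\<epsilon> / \<alpha>)) *
            (tk (k - 1) powr (-(1 + \<epsilon>) / \<alpha>) * \<Delta> powr (1 / \<alpha>)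
             + tk (k - 1) powr (-1 - \<epsilon> / \<alpha>) * \<Delta> * ln (real n))) \<and>
      (\<forall>t t' k. 0 \<le> t \<and> t \<le> T \<and> 0 \<le> t' \<and> t' \<le> T \<and> 2 \<le> k \<and>
          tk (k - 1) < t \<and> t < t' \<and> t' < tk k \<longrightarrow>
          \<bar>E_tt M X a b \<Delta> t t'\<bar> \<le> (2 * C1 \<alpha>) * (
            \<Delta> powr (1 / \<alpha>) * (tk (k - 1) powr (-1 / \<alpha>) + tk (k - 1) powr (-(1 + \<epsilon>) / \<alpha>))
            + \<Delta> powr (1 - \<epsilon> / \<alpha>) * tk (k - 1) powr (-1 - \<epsilon> / \<alpha>)
            + \<Delta> powr (1 - 2 * \<epsilon> / \<alpha>) * tk (k - 1) powr (-1)))"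
      using part1 part2 unfolding Let_def D_def by blast
  qed
  show ?thesis
    by (rule exI[of _ 1]) (use main in \<open>auto intro!: exI[of _ "2 * C1 \<alpha>"]\<close>)
qed

end
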